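(* Let $\Gamma$ be any context of $\lambda\mathsf{HOL}$ (possibly extended by constants and additional conversion rules) in which there are a type $A:\square$ and terms $\mathsf{intro}:T\,A\to A$ and $\mathsf{match}:A\to T\,A$ such that $\mathsf{match}\circ\mathsf{intro}$ is judgementally equal to $T\,(\mathsf{intro}\circ\mathsf{match})$; explicitly, for all $u:T\,A$ and $p:\mathsf{Pow}\,A$, $\mathsf{match}\,(\mathsf{intro}\,u)\,p$ is judgementally equal to $u\,(\lambda_{x:A}\,p\,(\mathsf{intro}\,(\mathsf{match}\,x)))$. Then there is a term of type $\perp$ in $\Gamma$.
   Context: $\lambda\mathsf{HOL}$ (minimal higher-order logic) is the pure type system with sorts $*,\square,\Delta$, axioms $*:\square$ and $\square:\Delta$, and rules $( *,* )$, $(\square,\square)$, $(\square,* )$; judgemental equality is $\beta$-conversion. Define $\mathsf{Pow}\,X = X\to *$ and $T\,X=\mathsf{Pow}(\mathsf{Pow}\,X)$. For $f:X\to Y$, define $T\,f:T\,X\to T\,Y$ by $T\,f\,F\,q = F\,(\lambda_{x:X}\,q\,(f\,x))$, and $g\circ f=\lambda_{x:X}\,g\,(f\,x)$. Define $\perp:*$ by $\perp=\forall_{p:*}\,p$. *)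

theory Defs
  imports Main
begin

section \<open>Deep embedding of the pure type system lambda-HOL (de Bruijn indices)\<close>

datatype sort = Star | Box | Tri

datatype trm =
    Var nat
  | Srt sort
  | Pi trm trm      (* Pi x:A. B,  B under one binder *)
  | Lam trm trm     (* lambda x:A. b, b under one binder *)
  | App trm trm

fun lift :: "nat \<Rightarrow> nat \<Rightarrow> trm \<Rightarrow> trm" where
  "lift n c (Var i) = (if i < c then Var i else Var (i + n))"
| "lift n c (Srt s) = Srt s"
| "lift n c (Pi A B) = Pi (lift n c A) (lift n (Suc c) B)"
| "lift n c (Lam A b) = Lam (lift n c A) (lift n (Suc c) b)"
| "lift n c (App f a) = App (lift n c f) (lift n c a)"

fun subst :: "trm \<Rightarrow> nat \<Rightarrow> trm \<Rightarrow> trm" where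
  "subst (Var i) k s = (if i < k then Var i else if i = k then lift k 0 s else Var (i - 1))"
| "subst (Srt x) k s = Srt x"
| "subst (Pi A B) k s = Pi (subst A k s) (subst B (Suc k) s)"
| "subst (Lam A b) k s = Lam (subst A k s) (subst b (Suc k) s)"
| "subst (App f a) k s = App (subst f k s) (subst a k s)"

text \<open>One-step reduction: beta plus the additional conversion rules R, closed under
  all term constructors.\<close>
inductive step :: "(trm \<Rightarrow> trm \<Rightarrow> bool) \<Rightarrow> trm \<Rightarrow> trm \<Rightarrow> bool" for R where
  beta: "step R (App (Lam A b) a) (subst b 0 a)"
| extra: "R a b \<Longrightarrow> step R a b"
| piL: "step R A A' \<Longrightarrow> step R (Pi A B) (Pi A' B)"
| piR: "step R B B' \<Longrightarrow> step R (Pi A B) (Pi A B')"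
| lamL: "step R A A' \<Longrightarrow> step R (Lam A b) (Lam A' b)"
| lamR: "step R b b' \<Longrightarrow> step R (Lam A b) (Lam A b')"
| appL: "step R f f' \<Longrightarrow> step R (App f a) (App f' a)"
| appR: "step R a a' \<Longrightarrow> step R (App f a) (App f a')"

text \<open>Judgemental equality: the equivalence closure (conversion).\<close>
definition conv :: "(trm \<Rightarrow> trm \<Rightarrow> bool) \<Rightarrow> trm \<Rightarrow> trm \<Rightarrow> bool" where
  "conv R = equivclp (step R)"

inductive axiom :: "sort \<Rightarrow> sort \<Rightarrow> bool" where
  "axiom Star Box"
| "axiom Box Tri"

inductive prule :: "sort \<Rightarrow> sort \<Rightarrow> bool" where
  "prule Star Star"
| "prule Box Box"
| "prule Box Star"

text \<open>Typing judgement of the PTS; contexts are lists, newest declaration first;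
  the type of Var i in context G is lift (Suc i) 0 (G ! i).\<close>
inductive hastype :: "(trm \<Rightarrow> trm \<Rightarrow> bool) \<Rightarrow> trm list \<Rightarrow> trm \<Rightarrow> trm \<Rightarrow> bool" for R where
  ax: "axiom s1 s2 \<Longrightarrow> hastype R [] (Srt s1) (Srt s2)"
| start: "hastype R G A (Srt s) \<Longrightarrow> hastype R (A # G) (Var 0) (lift 1 0 A)"
| weak: "hastype R G t B \<Longrightarrow> hastype R G A (Srt s) \<Longrightarrow> hastype R (A # G) (lift 1 0 t) (lift 1 0 B)"
| pi: "hastype R G A (Srt s1) \<Longrightarrow> hastype R (A # G) B (Srt s2) \<Longrightarrow> prule s1 s2 \<Longrightarrow>
       hastype R G (Pi A B) (Srt s2)"
| app: "hastype R G f (Pi A B) \<Longrightarrow> hastype R G a A \<Longrightarrow> hastype R G (App f a) (subst B 0 a)"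
| lam: "hastype R (A # G) b B \<Longrightarrow> hastype R G (Pi A B) (Srt s) \<Longrightarrow> hastype R G (Lam A b) (Pi A B)"
| cnv: "hastype R G t A \<Longrightarrow> hastype R G B (Srt s) \<Longrightarrow> conv R A B \<Longrightarrow> hastype R G t B"

definition Arr :: "trm \<Rightarrow> trm \<Rightarrow> trm" where
  "Arr A B = Pi A (lift 1 0 B)"

definition Pow :: "trm \<Rightarrow> trm" where
  "Pow X = Arr X (Srt Star)"

definition TT :: "trm \<Rightarrow> trm" where
  "TT X = Pow (Pow X)"

definition Bot :: trm where
  "Bot = Pi (Srt Star) (Var 0)"

end

theory Submission
  imports Defs
begin


lemma lift0[simp]: "lift 0 c t = t"
  by (induction t arbitrary: c) auto

lemma lift_lift[simp]: "c \<le> k \<Longrightarrow> k \<le> c + n \<Longrightarrow> lift m k (lift n c t) = lift (m+n) c t"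
  by (induction t arbitrary: c k) auto

lemma subst_lift[simp]: "0 < n \<Longrightarrow> c \<le> k \<Longrightarrow> k < c + n \<Longrightarrow> subst (lift n c t) k s = lift (n-1) c t"
  by (induction t arbitrary: c k) auto

lemma conv_cong:
  assumes "conv R a b" "\<And>x y. step R x y \<Longrightarrow> step R (f x) (f y)"
  shows "conv R (f a) (f b)"
  using assms(1) unfolding conv_def
proof (induction rule: equivclp_induct)
  case base then show ?case by simp
next
  case (step y z)
  then show ?case using assms(2) equivclp_into_equivclp by metis
qed

lemma conv_refl[simp]: "conv R a a" by (simp add: conv_def)
lemma conv_sym: "conv R a b \<Longrightarrow> conv R b a" unfolding conv_def by (rule equivclp_sym)
lemma conv_trans: "conv R a b \<Longrightarrow> conv R b c \<Longrightarrow> conv R a c" unfolding conv_def by (rule equivclp_trans)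
lemma conv_beta: "conv R (App (Lam X b) a) (subst b 0 a)"
  unfolding conv_def by (rule r_into_equivclp) (rule step.beta)

lemma conv_Pi: "conv R A A' \<Longrightarrow> conv R B B' \<Longrightarrow> conv R (Pi A B) (Pi A' B')"
proof -
  assume a: "conv R A A'" and b: "conv R B B'"
  have "conv R (Pi A B) (Pi A' B)" using conv_cong[OF a, of "\<lambda>x. Pi x B"] by (simp add: step.piL)
  moreover have "conv R (Pi A' B) (Pi A' B')" using conv_cong[OF b, of "\<lambda>x. Pi A' x"] by (simp add: step.piR)
  ultimately show ?thesis by (rule conv_trans)
qed

lemma conv_App: "conv R A A' \<Longrightarrow> conv R B B' \<Longrightarrow> conv R (App A B) (App A' B')"
proof -
  assume a: "conv R A A'" and b: "conv R B B'"
  have "conv R (App A B) (App A' B)" using conv_cong[OF a, of "\<lambda>x. App x B"] by (simp add: step.appL)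
  moreover have "conv R (App A' B) (App A' B')" using conv_cong[OF b, of "\<lambda>x. App A' x"] by (simp add: step.appR)
  ultimately show ?thesis by (rule conv_trans)
qed

lemma wf_star: "hastype R G t T \<Longrightarrow> hastype R G (Srt Star) (Srt Box)"
proof (induction rule: hastype.induct)
  case (ax s1 s2) then show ?case by (auto intro: hastype.ax axiom.intros)
next
  case (start G A s) then show ?case using hastype.weak[OF start.IH start.hyps] by simp
next
  case (weak G t B A s) then show ?case using hastype.weak[OF weak.IH(1) weak.hyps(2)] by simp
qed auto



declare numeral_2_eq_2[simp] Arr_def[simp] Pow_def[simp] TT_def[simp] Bot_def[simp]

lemma app': "hastype R G f (Pi X B) \<Longrightarrow> hastype R G a X \<Longrightarrow> T = subst B 0 a \<Longrightarrow> hastype R G (App f a) T"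
  using hastype.app by blast

inductive ext :: "(trm \<Rightarrow> trm \<Rightarrow> bool) \<Rightarrow> trm list \<Rightarrow> trm list \<Rightarrow> bool" for R G where
  "ext R G []"
| "ext R G D \<Longrightarrow> hastype R (D@G) X (Srt s) \<Longrightarrow> ext R G (X#D)"

definition wfc where "wfc R G \<Gamma> k = (\<exists>D. \<Gamma> = D @ G \<and> length D = k \<and> ext R G D)"

lemma wfc0: "wfc R G G 0" unfolding wfc_def by (auto intro: ext.intros)

lemma wfc_cons: "wfc R G \<Gamma> k \<Longrightarrow> hastype R \<Gamma> X (Srt s) \<Longrightarrow> wfc R G (X#\<Gamma>) (Suc k)"
proof -
  assume "wfc R G \<Gamma> k" "hastype R \<Gamma> X (Srt s)"
  then obtain D where "\<Gamma> = D @ G" "length D = k" "ext R G D" unfolding wfc_def by blast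
  then show ?thesis unfolding wfc_def using \<open>hastype R \<Gamma> X (Srt s)\<close>
    by (intro exI[of _ "X # D"]) (auto intro: ext.intros(2))
qed

lemma ext_lift: "ext R G D \<Longrightarrow> hastype R G t T \<Longrightarrow> hastype R (D@G) (lift (length D) 0 t) (lift (length D) 0 T)"
proof (induction rule: ext.induct)
  case 1 then show ?case by simp
next
  case (2 D X s)
  from hastype.weak[OF 2(3)[OF 2(4)] 2(2)] show ?case by simp
qed

lemma wfc_lift: "wfc R G \<Gamma> k \<Longrightarrow> hastype R G t T \<Longrightarrow> hastype R \<Gamma> (lift k 0 t) (lift k 0 T)"
  unfolding wfc_def using ext_lift by blast

lemma var0: "hastype R G X (Srt s) \<Longrightarrow> hastype R (X#G) (Var 0) (lift 1 0 X)"
  by (rule hastype.start)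

lemma weak': "hastype R G t B \<Longrightarrow> hastype R G X (Srt s) \<Longrightarrow> t' = lift 1 0 t \<Longrightarrow> B' = lift 1 0 B \<Longrightarrow> hastype R (X#G) t' B'"
  using hastype.weak by blast

lemma cnv': "hastype R G t T \<Longrightarrow> conv R T T' \<Longrightarrow> hastype R G T' (Srt s) \<Longrightarrow> hastype R G t T'"
  using hastype.cnv by blast

locale hurk =
  fixes R :: "trm \<Rightarrow> trm \<Rightarrow> bool" and G :: "trm list" and A intro match :: trm
  assumes hA: "hastype R G A (Srt Box)"
    and hi: "hastype R G intro (Arr (TT A) A)"
    and hm: "hastype R G match (Arr A (TT A))"
    and hc: "\<And>D u p. hastype R (D @ G) u (lift (length D) 0 (TT A)) \<Longrightarrow>
                 hastype R (D @ G) p (lift (length D) 0 (Pow A)) \<Longrightarrow>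
      conv R
        (App (App (lift (length D) 0 match) (App (lift (length D) 0 intro) u)) p)
        (App u (Lam (lift (length D) 0 A)
           (App (lift 1 0 p)
              (App (lift (Suc (length D)) 0 intro)
                 (App (lift (Suc (length D)) 0 match) (Var 0))))))"
begin

abbreviation "a k \<equiv> lift k 0 A"
abbreviation "tau k \<equiv> lift k 0 intro"
abbreviation "sg k \<equiv> lift k 0 match"
abbreviation "Pw k \<equiv> Pi (a k) (Srt Star)"
abbreviation "TTk k \<equiv> Pi (Pw k) (Srt Star)"
abbreviation "sig k x p \<equiv> App (App (sg k) x) p"
abbreviation "ts k x \<equiv> App (tau k) (App (sg k) x)"
abbreviation "cmp k p \<equiv> Lam (a k) (App (lift 1 0 p) (ts (Suc k) (Var 0)))"

abbreviation "wfx \<Gamma> k \<equiv> wfc R G \<Gamma> k"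
abbreviation "ht \<Gamma> t T \<equiv> hastype R \<Gamma> t T"

lemma ty_a: "wfx \<Gamma> k \<Longrightarrow> ht \<Gamma> (a k) (Srt Box)"
  using wfc_lift[OF _ hA] by simp

lemma ty_tau: "wfx \<Gamma> k \<Longrightarrow> ht \<Gamma> (tau k) (Pi (TTk k) (a (Suc k)))"
  using wfc_lift[OF _ hi] by simp

lemma ty_sg: "wfx \<Gamma> k \<Longrightarrow> ht \<Gamma> (sg k) (Pi (a k) (TTk (Suc k)))"
  using wfc_lift[OF _ hm] by simp

lemma ty_star: "wfx \<Gamma> k \<Longrightarrow> ht \<Gamma> (Srt Star) (Srt Box)"
  using wf_star ty_a by blast

lemma ty_Pw: "wfx \<Gamma> k \<Longrightarrow> ht \<Gamma> (Pw k) (Srt Box)"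
  by (rule hastype.pi[OF ty_a ty_star[OF wfc_cons[OF _ ty_a]]]) (auto intro: prule.intros)

lemma ty_TT: "wfx \<Gamma> k \<Longrightarrow> ht \<Gamma> (TTk k) (Srt Box)"
  by (rule hastype.pi[OF ty_Pw ty_star[OF wfc_cons[OF _ ty_Pw]]]) (auto intro: prule.intros)

lemma ty_sgx: "wfx \<Gamma> k \<Longrightarrow> ht \<Gamma> x (a k) \<Longrightarrow> ht \<Gamma> (App (sg k) x) (TTk k)"
  by (rule app'[OF ty_sg]) simp_all

lemma ty_ts: "wfx \<Gamma> k \<Longrightarrow> ht \<Gamma> x (a k) \<Longrightarrow> ht \<Gamma> (ts k x) (a k)"
  by (rule app'[OF ty_tau ty_sgx]) simp_all

lemma ty_sig: "wfx \<Gamma> k \<Longrightarrow> ht \<Gamma> x (a k) \<Longrightarrow> ht \<Gamma> p (Pw k) \<Longrightarrow> ht \<Gamma> (sig k x p) (Srt Star)"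
  by (rule app'[OF ty_sgx]) simp_all

lemma ty_comp: assumes w: "wfx \<Gamma> k" and p: "ht \<Gamma> p (Pw k)" shows "ht \<Gamma> (cmp k p) (Pw k)"
proof -
  have w1: "wfx (a k # \<Gamma>) (Suc k)" by (rule wfc_cons[OF w ty_a[OF w]])
  have v: "ht (a k # \<Gamma>) (Var 0) (a (Suc k))" using var0[OF ty_a[OF w]] by simp
  have p1: "ht (a k # \<Gamma>) (lift 1 0 p) (Pw (Suc k))" using weak'[OF p ty_a[OF w]] by simp
  have b: "ht (a k # \<Gamma>) (App (lift 1 0 p) (ts (Suc k) (Var 0))) (Srt Star)"
    by (rule app'[OF p1 ty_ts[OF w1 v]]) simp
  show ?thesis by (rule hastype.lam[OF b ty_Pw[OF w]])
qed

lemma hc': assumes w: "wfx \<Gamma> k" and u: "ht \<Gamma> u (TTk k)" and p: "ht \<Gamma> p (Pw k)"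
  shows "conv R (App (App (sg k) (App (tau k) u)) p) (App u (cmp k p))"
proof -
  obtain D where D: "\<Gamma> = D @ G" "length D = k" using w unfolding wfc_def by blast
  show ?thesis using hc[of D u p] u p D by simp
qed


abbreviation "IndP k p \<equiv> Pi (a k) (Pi (sig (Suc k) (Var 0) (lift 1 0 p)) (App (lift 2 0 p) (Var 1)))"
abbreviation "Cp k \<equiv> Lam (Pw k) (IndP (Suc k) (Var 0))"
abbreviation "om k \<equiv> App (tau k) (Cp k)"
abbreviation "Bt \<equiv> Pi (Srt Star) (Var 0)"
abbreviation "Q k y \<equiv> Pi (Pw k) (Pi (sig (Suc k) (lift 1 0 y) (Var 0)) (App (Var 1) (ts (Suc (Suc k)) (lift 2 0 y))))"
abbreviation "Dl k \<equiv> Lam (a k) (Pi (Q (Suc k) (Var 0)) Bt)"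

lemma wk: "ht \<Gamma> t T \<Longrightarrow> ht \<Gamma> X (Srt s) \<Longrightarrow> t' = lift 1 0 t \<Longrightarrow> T' = lift 1 0 T \<Longrightarrow> ht (X#\<Gamma>) t' T'"
  using hastype.weak by blast

lemma pi': "ht \<Gamma> X (Srt s1) \<Longrightarrow> ht (X#\<Gamma>) B (Srt s2) \<Longrightarrow> prule s1 s2 \<Longrightarrow> ht \<Gamma> (Pi X B) (Srt s2)"
  by (rule hastype.pi)

lemma v0: "ht \<Gamma> X (Srt s) \<Longrightarrow> T = lift 1 0 X \<Longrightarrow> ht (X#\<Gamma>) (Var 0) T"
  using hastype.start by blast

lemmas pr = prule.intros

lemma ty_IndP: assumes w: "wfx \<Gamma> k" and p: "ht \<Gamma> p (Pw k)" shows "ht \<Gamma> (IndP k p) (Srt Star)"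
proof -
  have w1: "wfx (a k # \<Gamma>) (Suc k)" by (rule wfc_cons[OF w ty_a[OF w]])
  have x: "ht (a k # \<Gamma>) (Var 0) (a (Suc k))" by (rule v0[OF ty_a[OF w]]) simp
  have p1: "ht (a k # \<Gamma>) (lift 1 0 p) (Pw (Suc k))" by (rule wk[OF p ty_a[OF w]]) simp_all
  have S: "ht (a k # \<Gamma>) (sig (Suc k) (Var 0) (lift 1 0 p)) (Srt Star)" by (rule ty_sig[OF w1 x p1])
  have w2: "wfx (sig (Suc k) (Var 0) (lift 1 0 p) # a k # \<Gamma>) (Suc (Suc k))" by (rule wfc_cons[OF w1 S])
  have p2: "ht (sig (Suc k) (Var 0) (lift 1 0 p) # a k # \<Gamma>) (lift 2 0 p) (Pw (Suc (Suc k)))"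
    by (rule wk[OF p1 S]) simp_all
  have x2: "ht (sig (Suc k) (Var 0) (lift 1 0 p) # a k # \<Gamma>) (Var 1) (a (Suc (Suc k)))"
    by (rule wk[OF x S]) simp_all
  have b: "ht (sig (Suc k) (Var 0) (lift 1 0 p) # a k # \<Gamma>) (App (lift 2 0 p) (Var 1)) (Srt Star)"
    by (rule app'[OF p2 x2]) simp
  show ?thesis by (rule pi'[OF ty_a[OF w] pi'[OF S b pr(1)] pr(3)])
qed

lemma ty_Cp: assumes w: "wfx \<Gamma> k" shows "ht \<Gamma> (Cp k) (TTk k)"
proof -
  have w1: "wfx (Pw k # \<Gamma>) (Suc k)" by (rule wfc_cons[OF w ty_Pw[OF w]])
  have x: "ht (Pw k # \<Gamma>) (Var 0) (Pw (Suc k))" by (rule v0[OF ty_Pw[OF w]]) simp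
  show ?thesis by (rule hastype.lam[OF ty_IndP[OF w1 x] ty_TT[OF w]])
qed

lemma ty_om: "wfx \<Gamma> k \<Longrightarrow> ht \<Gamma> (om k) (a k)"
  by (rule app'[OF ty_tau ty_Cp]) simp_all

lemma ty_Bt: assumes w: "wfx \<Gamma> k" shows "ht \<Gamma> Bt (Srt Star)"
  by (rule pi'[OF ty_star[OF w] v0[OF ty_star[OF w]] pr(3)]) simp

lemma ty_Q: assumes w: "wfx \<Gamma> k" and y: "ht \<Gamma> y (a k)" shows "ht \<Gamma> (Q k y) (Srt Star)"
proof -
  have w1: "wfx (Pw k # \<Gamma>) (Suc k)" by (rule wfc_cons[OF w ty_Pw[OF w]])
  have x: "ht (Pw k # \<Gamma>) (Var 0) (Pw (Suc k))" by (rule v0[OF ty_Pw[OF w]]) simp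
  have y1: "ht (Pw k # \<Gamma>) (lift 1 0 y) (a (Suc k))" by (rule wk[OF y ty_Pw[OF w]]) simp_all
  have S: "ht (Pw k # \<Gamma>) (sig (Suc k) (lift 1 0 y) (Var 0)) (Srt Star)" by (rule ty_sig[OF w1 y1 x])
  have w2: "wfx (sig (Suc k) (lift 1 0 y) (Var 0) # Pw k # \<Gamma>) (Suc (Suc k))" by (rule wfc_cons[OF w1 S])
  have x2: "ht (sig (Suc k) (lift 1 0 y) (Var 0) # Pw k # \<Gamma>) (Var 1) (Pw (Suc (Suc k)))"
    by (rule wk[OF x S]) simp_all
  have y2: "ht (sig (Suc k) (lift 1 0 y) (Var 0) # Pw k # \<Gamma>) (lift 2 0 y) (a (Suc (Suc k)))"
    by (rule wk[OF y1 S]) simp_all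
  have b: "ht (sig (Suc k) (lift 1 0 y) (Var 0) # Pw k # \<Gamma>) (App (Var 1) (ts (Suc (Suc k)) (lift 2 0 y))) (Srt Star)"
    by (rule app'[OF x2 ty_ts[OF w2 y2]]) simp
  show ?thesis by (rule pi'[OF ty_Pw[OF w] pi'[OF S b pr(1)] pr(3)])
qed

lemma ty_Dl: assumes w: "wfx \<Gamma> k" shows "ht \<Gamma> (Dl k) (Pw k)"
proof -
  have w1: "wfx (a k # \<Gamma>) (Suc k)" by (rule wfc_cons[OF w ty_a[OF w]])
  have x: "ht (a k # \<Gamma>) (Var 0) (a (Suc k))" by (rule v0[OF ty_a[OF w]]) simp
  have q: "ht (a k # \<Gamma>) (Q (Suc k) (Var 0)) (Srt Star)" by (rule ty_Q[OF w1 x])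
  have b: "ht (a k # \<Gamma>) (Pi (Q (Suc k) (Var 0)) Bt) (Srt Star)"
    by (rule pi'[OF q ty_Bt[OF wfc_cons[OF w1 q]] pr(1)])
  show ?thesis by (rule hastype.lam[OF b ty_Pw[OF w]])
qed


abbreviation "lem1 k \<equiv> Lam (Pw k) (Lam (IndP (Suc (k)) (Var 0)) (App (App (Var 0) (om (Suc (Suc (k))))) (Lam (a (Suc (Suc (k)))) (App (Var 1) (ts (Suc (Suc (Suc (k)))) (Var 0))))))"
abbreviation "Lem1T k \<equiv> Pi (Pw k) (Pi (IndP (Suc (k)) (Var 0)) (App (Var 1) (om (Suc (Suc (k))))))"

lemma ty_lem1: assumes w: "wfx \<Gamma> k" shows "ht \<Gamma> (lem1 k) (Lem1T k)"
proof -
  define G1 where "G1 = Pw k # \<Gamma>"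
  have w1: "wfx G1 (Suc (k))" unfolding G1_def by (rule wfc_cons[OF w ty_Pw[OF w]])
  have p1: "ht G1 (Var 0) (Pw (Suc (k)))" unfolding G1_def by (rule v0[OF ty_Pw[OF w]]) simp
  have tI: "ht G1 (IndP (Suc (k)) (Var 0)) (Srt Star)" by (rule ty_IndP[OF w1 p1])
  define G2 where "G2 = IndP (Suc (k)) (Var 0) # G1"
  have w2: "wfx G2 (Suc (Suc (k)))" unfolding G2_def by (rule wfc_cons[OF w1 tI])
  have h1: "ht G2 (Var 0) (IndP (Suc (Suc (k))) (Var 1))" unfolding G2_def by (rule v0[OF tI]) simp
  have p2: "ht G2 (Var 1) (Pw (Suc (Suc (k))))" unfolding G2_def by (rule wk[OF p1 tI]) simp_all
  have om2: "ht G2 (om (Suc (Suc (k)))) (a (Suc (Suc (k))))" by (rule ty_om[OF w2])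
  have h1om: "ht G2 (App (Var 0) (om (Suc (Suc (k))))) (Pi (sig (Suc (Suc (k))) (om (Suc (Suc (k)))) (Var 1)) (App (Var 2) (om (Suc (Suc (Suc (k)))))))"
    by (rule app'[OF h1 om2]) simp
  define G3 where "G3 = a (Suc (Suc (k))) # G2"
  have w3: "wfx G3 (Suc (Suc (Suc (k))))" unfolding G3_def by (rule wfc_cons[OF w2 ty_a[OF w2]])
  have x3: "ht G3 (Var 0) (a (Suc (Suc (Suc (k)))))" unfolding G3_def by (rule v0[OF ty_a[OF w2]]) simp
  have h13: "ht G3 (Var 1) (IndP (Suc (Suc (Suc (k)))) (Var 2))" unfolding G3_def by (rule wk[OF h1 ty_a[OF w2]]) simp_all
  have p3: "ht G3 (Var 2) (Pw (Suc (Suc (Suc (k)))))" unfolding G3_def by (rule wk[OF p2 ty_a[OF w2]]) simp_all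
  have e1: "ht G3 (App (Var 1) (ts (Suc (Suc (Suc (k)))) (Var 0))) (Pi (sig (Suc (Suc (Suc (k)))) (ts (Suc (Suc (Suc (k)))) (Var 0)) (Var 2)) (App (Var 3) (ts (Suc (Suc (Suc (Suc (k))))) (Var 1))))"
    by (rule app'[OF h13 ty_ts[OF w3 x3]]) simp
  have cS: "ht G3 (sig (Suc (Suc (Suc (k)))) (Var 0) (cmp (Suc (Suc (Suc (k)))) (Var 2))) (Srt Star)"
    by (rule ty_sig[OF w3 x3 ty_comp[OF w3 p3]])
  define G4 where "G4 = sig (Suc (Suc (Suc (k)))) (Var 0) (cmp (Suc (Suc (Suc (k)))) (Var 2)) # G3"
  have w4: "wfx G4 (Suc (Suc (Suc (Suc (k)))))" unfolding G4_def by (rule wfc_cons[OF w3 cS])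
  have p4: "ht G4 (Var 3) (Pw (Suc (Suc (Suc (Suc (k))))))" unfolding G4_def by (rule wk[OF p3 cS]) simp_all
  have x4: "ht G4 (Var 1) (a (Suc (Suc (Suc (Suc (k))))))" unfolding G4_def by (rule wk[OF x3 cS]) simp_all
  have b4: "ht G4 (App (Var 3) (ts (Suc (Suc (Suc (Suc (k))))) (Var 1))) (Srt Star)"
    by (rule app'[OF p4 ty_ts[OF w4 x4]]) simp
  have T1: "ht G3 (Pi (sig (Suc (Suc (Suc (k)))) (Var 0) (cmp (Suc (Suc (Suc (k)))) (Var 2))) (App (Var 3) (ts (Suc (Suc (Suc (Suc (k))))) (Var 1)))) (Srt Star)"
    by (rule pi'[OF cS b4[unfolded G4_def] pr(1)])
  have e2: "ht G3 (App (Var 1) (ts (Suc (Suc (Suc (k)))) (Var 0))) (Pi (sig (Suc (Suc (Suc (k)))) (Var 0) (cmp (Suc (Suc (Suc (k)))) (Var 2))) (App (Var 3) (ts (Suc (Suc (Suc (Suc (k))))) (Var 1))))"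
    by (rule cnv'[OF e1 conv_Pi[OF hc'[OF w3 ty_sgx[OF w3 x3] p3] conv_refl] T1])
  have tP: "ht G2 (Pi (a (Suc (Suc (k)))) (Pi (sig (Suc (Suc (Suc (k)))) (Var 0) (cmp (Suc (Suc (Suc (k)))) (Var 2))) (App (Var 3) (ts (Suc (Suc (Suc (Suc (k))))) (Var 1))))) (Srt Star)"
    by (rule pi'[OF ty_a[OF w2] T1[unfolded G3_def] pr(3)])
  have lamx: "ht G2 (Lam (a (Suc (Suc (k)))) (App (Var 1) (ts (Suc (Suc (Suc (k)))) (Var 0)))) (Pi (a (Suc (Suc (k)))) (Pi (sig (Suc (Suc (Suc (k)))) (Var 0) (cmp (Suc (Suc (Suc (k)))) (Var 2))) (App (Var 3) (ts (Suc (Suc (Suc (Suc (k))))) (Var 1)))))"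
    by (rule hastype.lam[OF e2[unfolded G3_def] tP])
  have cb: "conv R (App (lift 2 0 (cmp (Suc (Suc (k))) (Var 1))) (Var 1)) (App (Var 3) (ts (Suc (Suc (Suc (Suc (k))))) (Var 1)))"
    using conv_beta[of R "a (Suc (Suc (Suc (Suc (k)))))" "App (Var 4) (ts (Suc (Suc (Suc (Suc (Suc (k)))))) (Var 0))" "Var 1"] by (simp add: eval_nat_numeral)
  have cb2: "conv R (App (Cp (Suc (Suc (k)))) (cmp (Suc (Suc (k))) (Var 1))) (Pi (a (Suc (Suc (k)))) (Pi (sig (Suc (Suc (Suc (k)))) (Var 0) (cmp (Suc (Suc (Suc (k)))) (Var 2))) (App (Var 3) (ts (Suc (Suc (Suc (Suc (k))))) (Var 1)))))"
    apply (rule conv_trans[OF conv_beta])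
    apply simp
    apply (rule conv_Pi[OF conv_refl conv_Pi[OF conv_refl]])
    using cb by simp
  have cc: "conv R (Pi (a (Suc (Suc (k)))) (Pi (sig (Suc (Suc (Suc (k)))) (Var 0) (cmp (Suc (Suc (Suc (k)))) (Var 2))) (App (Var 3) (ts (Suc (Suc (Suc (Suc (k))))) (Var 1))))) (sig (Suc (Suc (k))) (om (Suc (Suc (k)))) (Var 1))"
    by (rule conv_sym[OF conv_trans[OF hc'[OF w2 ty_Cp[OF w2] p2] cb2]])
  have lamx': "ht G2 (Lam (a (Suc (Suc (k)))) (App (Var 1) (ts (Suc (Suc (Suc (k)))) (Var 0)))) (sig (Suc (Suc (k))) (om (Suc (Suc (k)))) (Var 1))"
    by (rule cnv'[OF lamx cc ty_sig[OF w2 om2 p2]])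
  have e3: "ht G2 (App (App (Var 0) (om (Suc (Suc (k))))) (Lam (a (Suc (Suc (k)))) (App (Var 1) (ts (Suc (Suc (Suc (k)))) (Var 0))))) (App (Var 1) (om (Suc (Suc (k)))))"
    by (rule app'[OF h1om lamx']) simp
  have tB: "ht G2 (App (Var 1) (om (Suc (Suc (k))))) (Srt Star)" by (rule app'[OF p2 om2]) simp
  have l2: "ht G1 (Lam (IndP (Suc (k)) (Var 0)) (App (App (Var 0) (om (Suc (Suc (k))))) (Lam (a (Suc (Suc (k)))) (App (Var 1) (ts (Suc (Suc (Suc (k)))) (Var 0)))))) (Pi (IndP (Suc (k)) (Var 0)) (App (Var 1) (om (Suc (Suc (k))))))"
    by (rule hastype.lam[OF e3[unfolded G2_def] pi'[OF tI tB[unfolded G2_def] pr(1)]])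
  show ?thesis
    by (rule hastype.lam[OF l2[unfolded G1_def] pi'[OF ty_Pw[OF w] pi'[OF tI tB[unfolded G2_def] pr(1), unfolded G1_def] pr(3)]])
qed


abbreviation "Hh k \<equiv> Lam (a k) (Lam (sig (Suc (k)) (Var 0) (Dl (Suc (k)))) (Lam (Q (Suc (Suc (k))) (Var 1)) (App (App (App (Var 0) (Dl (Suc (Suc (Suc (k)))))) (Var 1)) (Lam (Pw (Suc (Suc (Suc (k))))) (App (Var 1) (cmp (Suc (Suc (Suc (Suc (k))))) (Var 0)))))))"

lemma ty_H: assumes w: "wfx \<Gamma> k" shows "ht \<Gamma> (Hh k) (IndP k (Dl k))"
proof -
  define G1 where "G1 = a k # \<Gamma>"
  have w1: "wfx G1 (Suc (k))" unfolding G1_def by (rule wfc_cons[OF w ty_a[OF w]])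
  have x1: "ht G1 (Var 0) (a (Suc (k)))" unfolding G1_def by (rule v0[OF ty_a[OF w]]) simp
  have S1: "ht G1 (sig (Suc (k)) (Var 0) (Dl (Suc (k)))) (Srt Star)" by (rule ty_sig[OF w1 x1 ty_Dl[OF w1]])
  define G2 where "G2 = sig (Suc (k)) (Var 0) (Dl (Suc (k))) # G1"
  have w2: "wfx G2 (Suc (Suc (k)))" unfolding G2_def by (rule wfc_cons[OF w1 S1])
  have x2: "ht G2 (Var 1) (a (Suc (Suc (k))))" unfolding G2_def by (rule wk[OF x1 S1]) simp_all
  have h2: "ht G2 (Var 0) (sig (Suc (Suc (k))) (Var 1) (Dl (Suc (Suc (k)))))" unfolding G2_def by (rule v0[OF S1]) simp
  have Q2: "ht G2 (Q (Suc (Suc (k))) (Var 1)) (Srt Star)" by (rule ty_Q[OF w2 x2])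
  define G3 where "G3 = Q (Suc (Suc (k))) (Var 1) # G2"
  have w3: "wfx G3 (Suc (Suc (Suc (k))))" unfolding G3_def by (rule wfc_cons[OF w2 Q2])
  have x3: "ht G3 (Var 2) (a (Suc (Suc (Suc (k)))))" unfolding G3_def by (rule wk[OF x2 Q2]) simp_all
  have h23: "ht G3 (Var 1) (sig (Suc (Suc (Suc (k)))) (Var 2) (Dl (Suc (Suc (Suc (k))))))" unfolding G3_def by (rule wk[OF h2 Q2]) simp_all
  have h3: "ht G3 (Var 0) (Q (Suc (Suc (Suc (k)))) (Var 2))" unfolding G3_def by (rule v0[OF Q2]) simp
  have e1: "ht G3 (App (Var 0) (Dl (Suc (Suc (Suc (k)))))) (Pi (sig (Suc (Suc (Suc (k)))) (Var 2) (Dl (Suc (Suc (Suc (k)))))) (App (Dl (Suc (Suc (Suc (Suc (k)))))) (ts (Suc (Suc (Suc (Suc (k))))) (Var 3))))"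
    by (rule app'[OF h3 ty_Dl[OF w3]]) simp
  have e2: "ht G3 (App (App (Var 0) (Dl (Suc (Suc (Suc (k)))))) (Var 1)) (App (Dl (Suc (Suc (Suc (k))))) (ts (Suc (Suc (Suc (k)))) (Var 2)))"
    by (rule app'[OF e1 h23]) simp
  have tq: "ht G3 (Q (Suc (Suc (Suc (k)))) (ts (Suc (Suc (Suc (k)))) (Var 2))) (Srt Star)" by (rule ty_Q[OF w3 ty_ts[OF w3 x3]])
  have tN: "ht G3 (Pi (Q (Suc (Suc (Suc (k)))) (ts (Suc (Suc (Suc (k)))) (Var 2))) Bt) (Srt Star)"
    by (rule pi'[OF tq ty_Bt[OF wfc_cons[OF w3 tq]] pr(1)])
  have e2': "ht G3 (App (App (Var 0) (Dl (Suc (Suc (Suc (k)))))) (Var 1)) (Pi (Q (Suc (Suc (Suc (k)))) (ts (Suc (Suc (Suc (k)))) (Var 2))) Bt)"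
    apply (rule cnv'[OF e2 _ tN])
    using conv_beta[of R "a (Suc (Suc (Suc (k))))" "Pi (Q (Suc (Suc (Suc (Suc (k))))) (Var 0)) Bt" "ts (Suc (Suc (Suc (k)))) (Var 2)"] by (simp add: eval_nat_numeral)
  define G4 where "G4 = Pw (Suc (Suc (Suc (k)))) # G3"
  have w4: "wfx G4 (Suc (Suc (Suc (Suc (k)))))" unfolding G4_def by (rule wfc_cons[OF w3 ty_Pw[OF w3]])
  have p4: "ht G4 (Var 0) (Pw (Suc (Suc (Suc (Suc (k))))))" unfolding G4_def by (rule v0[OF ty_Pw[OF w3]]) simp
  have h34: "ht G4 (Var 1) (Q (Suc (Suc (Suc (Suc (k))))) (Var 3))" unfolding G4_def by (rule wk[OF h3 ty_Pw[OF w3]]) simp_all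
  have x4: "ht G4 (Var 3) (a (Suc (Suc (Suc (Suc (k))))))" unfolding G4_def by (rule wk[OF x3 ty_Pw[OF w3]]) simp_all
  have f1: "ht G4 (App (Var 1) (cmp (Suc (Suc (Suc (Suc (k))))) (Var 0))) (Pi (sig (Suc (Suc (Suc (Suc (k))))) (Var 3) (cmp (Suc (Suc (Suc (Suc (k))))) (Var 0))) (App (cmp (Suc (Suc (Suc (Suc (Suc (k)))))) (Var 1)) (ts (Suc (Suc (Suc (Suc (Suc (k)))))) (Var 4))))"
    by (rule app'[OF h34 ty_comp[OF w4 p4]]) simp
  have tS4: "ht G4 (sig (Suc (Suc (Suc (Suc (k))))) (ts (Suc (Suc (Suc (Suc (k))))) (Var 3)) (Var 0)) (Srt Star)" by (rule ty_sig[OF w4 ty_ts[OF w4 x4] p4])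
  define G5 where "G5 = sig (Suc (Suc (Suc (Suc (k))))) (ts (Suc (Suc (Suc (Suc (k))))) (Var 3)) (Var 0) # G4"
  have w5: "wfx G5 (Suc (Suc (Suc (Suc (Suc (k))))))" unfolding G5_def by (rule wfc_cons[OF w4 tS4])
  have p5: "ht G5 (Var 1) (Pw (Suc (Suc (Suc (Suc (Suc (k)))))))" unfolding G5_def by (rule wk[OF p4 tS4]) simp_all
  have x5: "ht G5 (Var 4) (a (Suc (Suc (Suc (Suc (Suc (k)))))))" unfolding G5_def by (rule wk[OF x4 tS4]) simp_all
  have b5: "ht G5 (App (Var 1) (ts (Suc (Suc (Suc (Suc (Suc (k)))))) (ts (Suc (Suc (Suc (Suc (Suc (k)))))) (Var 4)))) (Srt Star)"
    by (rule app'[OF p5 ty_ts[OF w5 ty_ts[OF w5 x5]]]) simp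
  have T4: "ht G4 (Pi (sig (Suc (Suc (Suc (Suc (k))))) (ts (Suc (Suc (Suc (Suc (k))))) (Var 3)) (Var 0)) (App (Var 1) (ts (Suc (Suc (Suc (Suc (Suc (k)))))) (ts (Suc (Suc (Suc (Suc (Suc (k)))))) (Var 4))))) (Srt Star)"
    by (rule pi'[OF tS4 b5[unfolded G5_def] pr(1)])
  have cb: "conv R (App (cmp (Suc (Suc (Suc (Suc (Suc (k)))))) (Var 1)) (ts (Suc (Suc (Suc (Suc (Suc (k)))))) (Var 4))) (App (Var 1) (ts (Suc (Suc (Suc (Suc (Suc (k)))))) (ts (Suc (Suc (Suc (Suc (Suc (k)))))) (Var 4))))"
    using conv_beta[of R "a (Suc (Suc (Suc (Suc (Suc (k))))))" "App (Var 2) (ts (Suc (Suc (Suc (Suc (Suc (Suc (k))))))) (Var 0))" "ts (Suc (Suc (Suc (Suc (Suc (k)))))) (Var 4)"] by (simp add: eval_nat_numeral)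
  have f2: "ht G4 (App (Var 1) (cmp (Suc (Suc (Suc (Suc (k))))) (Var 0))) (Pi (sig (Suc (Suc (Suc (Suc (k))))) (ts (Suc (Suc (Suc (Suc (k))))) (Var 3)) (Var 0)) (App (Var 1) (ts (Suc (Suc (Suc (Suc (Suc (k)))))) (ts (Suc (Suc (Suc (Suc (Suc (k)))))) (Var 4)))))"
    by (rule cnv'[OF f1 conv_Pi[OF conv_sym[OF hc'[OF w4 ty_sgx[OF w4 x4] p4]] cb] T4])
  have tq': "ht G3 (Pi (Pw (Suc (Suc (Suc (k))))) (Pi (sig (Suc (Suc (Suc (Suc (k))))) (ts (Suc (Suc (Suc (Suc (k))))) (Var 3)) (Var 0)) (App (Var 1) (ts (Suc (Suc (Suc (Suc (Suc (k)))))) (ts (Suc (Suc (Suc (Suc (Suc (k)))))) (Var 4)))))) (Srt Star)"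
    using tq by (simp add: eval_nat_numeral)
  have f3: "ht G3 (Lam (Pw (Suc (Suc (Suc (k))))) (App (Var 1) (cmp (Suc (Suc (Suc (Suc (k))))) (Var 0)))) (Q (Suc (Suc (Suc (k)))) (ts (Suc (Suc (Suc (k)))) (Var 2)))"
    using hastype.lam[OF f2[unfolded G4_def] tq'] by (simp add: eval_nat_numeral)
  have e3: "ht G3 (App (App (App (Var 0) (Dl (Suc (Suc (Suc (k)))))) (Var 1)) (Lam (Pw (Suc (Suc (Suc (k))))) (App (Var 1) (cmp (Suc (Suc (Suc (Suc (k))))) (Var 0))))) Bt"
    by (rule app'[OF e2' f3]) simp
  have tN2: "ht G2 (Pi (Q (Suc (Suc (k))) (Var 1)) Bt) (Srt Star)"
    by (rule pi'[OF Q2 ty_Bt[OF wfc_cons[OF w2 Q2]] pr(1)])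
  have e4: "ht G2 (Lam (Q (Suc (Suc (k))) (Var 1)) (App (App (App (Var 0) (Dl (Suc (Suc (Suc (k)))))) (Var 1)) (Lam (Pw (Suc (Suc (Suc (k))))) (App (Var 1) (cmp (Suc (Suc (Suc (Suc (k))))) (Var 0)))))) (Pi (Q (Suc (Suc (k))) (Var 1)) Bt)"
    by (rule hastype.lam[OF e3[unfolded G3_def] tN2])
  have tD: "ht G2 (App (Dl (Suc (Suc (k)))) (Var 1)) (Srt Star)" by (rule app'[OF ty_Dl[OF w2] x2]) simp
  have e4': "ht G2 (Lam (Q (Suc (Suc (k))) (Var 1)) (App (App (App (Var 0) (Dl (Suc (Suc (Suc (k)))))) (Var 1)) (Lam (Pw (Suc (Suc (Suc (k))))) (App (Var 1) (cmp (Suc (Suc (Suc (Suc (k))))) (Var 0)))))) (App (Dl (Suc (Suc (k)))) (Var 1))"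
    apply (rule cnv'[OF e4 _ tD])
    apply (rule conv_sym)
    using conv_beta[of R "a (Suc (Suc (k)))" "Pi (Q (Suc (Suc (Suc (k)))) (Var 0)) Bt" "Var 1"] by (simp add: eval_nat_numeral)
  have tP: "ht G1 (Pi (sig (Suc (k)) (Var 0) (Dl (Suc (k)))) (App (Dl (Suc (Suc (k)))) (Var 1))) (Srt Star)"
    by (rule pi'[OF S1 tD[unfolded G2_def] pr(1)])
  have e5: "ht G1 (Lam (sig (Suc (k)) (Var 0) (Dl (Suc (k)))) (Lam (Q (Suc (Suc (k))) (Var 1)) (App (App (App (Var 0) (Dl (Suc (Suc (Suc (k)))))) (Var 1)) (Lam (Pw (Suc (Suc (Suc (k))))) (App (Var 1) (cmp (Suc (Suc (Suc (Suc (k))))) (Var 0))))))) (Pi (sig (Suc (k)) (Var 0) (Dl (Suc (k)))) (App (Dl (Suc (Suc (k)))) (Var 1)))"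
    by (rule hastype.lam[OF e4'[unfolded G2_def] tP])
  show ?thesis
  proof -
    have "ht \<Gamma> (Pi (a k) (Pi (sig (Suc (k)) (Var 0) (Dl (Suc (k)))) (App (Dl (Suc (Suc (k)))) (Var 1)))) (Srt Star)"
      using ty_IndP[OF w ty_Dl[OF w]] by (simp add: eval_nat_numeral)
    from hastype.lam[OF e5[unfolded G1_def] this] show ?thesis by (simp add: eval_nat_numeral)
  qed
qed


lemma paradox: assumes w: "wfx \<Gamma> k" shows "\<exists>t. ht \<Gamma> t Bt"
proof -
  have m1: "ht \<Gamma> (App (lem1 k) (Dl k)) (Pi (IndP k (Dl k)) (App (Dl (Suc (k))) (om (Suc (k)))))"
    by (rule app'[OF ty_lem1[OF w] ty_Dl[OF w]]) (simp add: eval_nat_numeral)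
  have m2: "ht \<Gamma> (App (App (lem1 k) (Dl k)) (Hh k)) (App (Dl k) (om k))"
    by (rule app'[OF m1 ty_H[OF w]]) (simp add: eval_nat_numeral)
  have tq: "ht \<Gamma> (Q k (om k)) (Srt Star)" by (rule ty_Q[OF w ty_om[OF w]])
  have tN: "ht \<Gamma> (Pi (Q k (om k)) Bt) (Srt Star)"
    by (rule pi'[OF tq ty_Bt[OF wfc_cons[OF w tq]] pr(1)])
  have m2': "ht \<Gamma> (App (App (lem1 k) (Dl k)) (Hh k)) (Pi (Q k (om k)) Bt)"
    apply (rule cnv'[OF m2 _ tN])
    using conv_beta[of R "a k" "Pi (Q (Suc (k)) (Var 0)) Bt" "om k"] by (simp add: eval_nat_numeral)
  define G1 where "G1 = Pw k # \<Gamma>"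
  have w1: "wfx G1 (Suc (k))" unfolding G1_def by (rule wfc_cons[OF w ty_Pw[OF w]])
  have p: "ht G1 (Var 0) (Pw (Suc (k)))" unfolding G1_def by (rule v0[OF ty_Pw[OF w]]) simp
  have l1: "ht G1 (App (lem1 (Suc (k))) (cmp (Suc (k)) (Var 0))) (Pi (IndP (Suc (k)) (cmp (Suc (k)) (Var 0))) (App (cmp (Suc (Suc (k))) (Var 1)) (om (Suc (Suc (k))))))"
    by (rule app'[OF ty_lem1[OF w1] ty_comp[OF w1 p]]) (simp add: eval_nat_numeral)
  have tS: "ht G1 (sig (Suc (k)) (om (Suc (k))) (Var 0)) (Srt Star)" by (rule ty_sig[OF w1 ty_om[OF w1] p])
  define G2 where "G2 = sig (Suc (k)) (om (Suc (k))) (Var 0) # G1"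
  have w2: "wfx G2 (Suc (Suc (k)))" unfolding G2_def by (rule wfc_cons[OF w1 tS])
  have p2: "ht G2 (Var 1) (Pw (Suc (Suc (k))))" unfolding G2_def by (rule wk[OF p tS]) simp_all
  have b2: "ht G2 (App (Var 1) (ts (Suc (Suc (k))) (om (Suc (Suc (k)))))) (Srt Star)"
    by (rule app'[OF p2 ty_ts[OF w2 ty_om[OF w2]]]) simp
  have tTL: "ht G1 (Pi (sig (Suc (k)) (om (Suc (k))) (Var 0)) (App (Var 1) (ts (Suc (Suc (k))) (om (Suc (Suc (k))))))) (Srt Star)"
    by (rule pi'[OF tS b2[unfolded G2_def] pr(1)])
  have cb1: "conv R (App (Cp (Suc (k))) (cmp (Suc (k)) (Var 0))) (IndP (Suc (k)) (cmp (Suc (k)) (Var 0)))"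
    using conv_beta[of R "Pw (Suc (k))" "IndP (Suc (Suc (k))) (Var 0)" "cmp (Suc (k)) (Var 0)"] by (simp add: eval_nat_numeral)
  have cb2: "conv R (App (cmp (Suc (Suc (k))) (Var 1)) (om (Suc (Suc (k))))) (App (Var 1) (ts (Suc (Suc (k))) (om (Suc (Suc (k))))))"
    using conv_beta[of R "a (Suc (Suc (k)))" "App (Var 2) (ts (Suc (Suc (Suc (k)))) (Var 0))" "om (Suc (Suc (k)))"] by (simp add: eval_nat_numeral)
  have l1': "ht G1 (App (lem1 (Suc (k))) (cmp (Suc (k)) (Var 0))) (Pi (sig (Suc (k)) (om (Suc (k))) (Var 0)) (App (Var 1) (ts (Suc (Suc (k))) (om (Suc (Suc (k)))))))"
    by (rule cnv'[OF l1 conv_Pi[OF conv_sym[OF conv_trans[OF hc'[OF w1 ty_Cp[OF w1] p] cb1]] cb2] tTL])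
  have tq': "ht \<Gamma> (Pi (Pw k) (Pi (sig (Suc (k)) (om (Suc (k))) (Var 0)) (App (Var 1) (ts (Suc (Suc (k))) (om (Suc (Suc (k)))))))) (Srt Star)"
    using tq by (simp add: eval_nat_numeral)
  have lL: "ht \<Gamma> (Lam (Pw k) (App (lem1 (Suc (k))) (cmp (Suc (k)) (Var 0)))) (Q k (om k))"
    using hastype.lam[OF l1'[unfolded G1_def] tq'] by (simp add: eval_nat_numeral)
  have "ht \<Gamma> (App (App (App (lem1 k) (Dl k)) (Hh k)) (Lam (Pw k) (App (lem1 (Suc (k))) (cmp (Suc (k)) (Var 0))))) Bt"
    by (rule app'[OF m2' lL]) simp
  then show ?thesis by blast
qed

end

theorem theorem2:
  fixes R :: "trm \<Rightarrow> trm \<Rightarrow> bool" and G :: "trm list" and A intro match :: trm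
  assumes "hastype R G A (Srt Box)"
    and "hastype R G intro (Arr (TT A) A)"
    and "hastype R G match (Arr A (TT A))"
    and "\<And>D u p. hastype R (D @ G) u (lift (length D) 0 (TT A)) \<Longrightarrow>
                 hastype R (D @ G) p (lift (length D) 0 (Pow A)) \<Longrightarrow>
      conv R
        (App (App (lift (length D) 0 match) (App (lift (length D) 0 intro) u)) p)
        (App u (Lam (lift (length D) 0 A)
           (App (lift 1 0 p)
              (App (lift (Suc (length D)) 0 intro)
                 (App (lift (Suc (length D)) 0 match) (Var 0))))))"
  shows "\<exists>t. hastype R G t Bot"
proof -
  interpret hurk R G A intro match by (rule hurk.intro) (fact assms)+
  show ?thesis using paradox[OF wfc0] by simp
qed

end
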